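(* In the two-party one-way communication (Holevo–Frenkel–Weiner) scenario, classical shared randomness can increase the utility of a perfect one-bit classical channel: there exist finite sets $\mathcal{X},\mathcal{B}$ and a payoff function $\beta$ on correlations $P(\mathcal{B}|\mathcal{X})$ such that $\sup_{P\in\mathcal{C}_{\mathrm{SR}}}\beta(P)>\sup_{P\in\mathcal{C}}\beta(P)$.
   Context: Scenario: Alice receives an input $x$ from a finite set $\mathcal{X}$, Bob must output $b$ from a finite set $\mathcal{B}$; a correlation is a conditional distribution $P=(P(b|x))_{x\in\mathcal{X},b\in\mathcal{B}}$, and a task is a payoff function $\beta$ assigning a real number to each correlation. The utility of a resource for a task $\beta$ is $\sup\beta(P)$ over all correlations $P$ achievable with that resource. $\mathcal{C}$ (one bit of classical communication, no shared randomness, local randomness allowed): the set of correlations of the form $P(b|x)=\sum_{m\in\{0,1\}}E(m|x)D(b|m)$, where $E(\cdot|x)$ is a probability distribution on $\{0,1\}$ for each $x$ and $D(\cdot|m)$ is a probability distribution on $\mathcal{B}$ for each $m$. $\mathcal{C}_{\mathrm{SR}}$ (one bit of classical communication assisted by an arbitrary finite amount of classical shared randomness): the set of all finite convex combinations $\sum_{\lambda}q_\lambda P_\lambda$ with $q_\lambda\ge0$, $\sum_\lambda q_\lambda=1$, and each $P_\lambda\in\mathcal{C}$. *)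

theory Defs
  imports Main "HOL-Library.Extended_Real"
begin

text \<open>Correlations P(b|x) are represented as functions  nat \<Rightarrow> nat \<Rightarrow> real  on
  finite input set X and output set B (P x b = P(b|x)), vanishing outside X \<times> B.\<close>

definition is_distr :: "'a set \<Rightarrow> ('a \<Rightarrow> real) \<Rightarrow> bool" where
  "is_distr S p \<longleftrightarrow> (\<forall>s\<in>S. p s \<ge> 0) \<and> (\<Sum>s\<in>S. p s) = 1"

definition one_bit_corr :: "nat set \<Rightarrow> nat set \<Rightarrow> (nat \<Rightarrow> nat \<Rightarrow> real) set" where
  "one_bit_corr X B = {P. \<exists>(E :: nat \<Rightarrow> bool \<Rightarrow> real) (D :: bool \<Rightarrow> nat \<Rightarrow> real).
      (\<forall>x\<in>X. is_distr (UNIV :: bool set) (E x)) \<and> (\<forall>m. is_distr B (D m)) \<and>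
      P = (\<lambda>x b. if x \<in> X \<and> b \<in> B then (\<Sum>m\<in>(UNIV :: bool set). E x m * D m b) else 0)}"

definition one_bit_SR_corr :: "nat set \<Rightarrow> nat set \<Rightarrow> (nat \<Rightarrow> nat \<Rightarrow> real) set" where
  "one_bit_SR_corr X B = {P. \<exists>(n::nat) (q :: nat \<Rightarrow> real) Ps.
      (\<forall>i<n. q i \<ge> 0 \<and> Ps i \<in> one_bit_corr X B) \<and> (\<Sum>i<n. q i) = 1 \<and>
      P = (\<lambda>x b. \<Sum>i<n. q i * Ps i x b)}"

definition utility :: "((nat \<Rightarrow> nat \<Rightarrow> real) \<Rightarrow> real) \<Rightarrow> (nat \<Rightarrow> nat \<Rightarrow> real) set \<Rightarrow> ereal" where
  "utility \<beta> R = (SUP P\<in>R. ereal (\<beta> P))"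

end

theory Submission
  imports Defs
begin

definition T :: "nat \<Rightarrow> nat \<Rightarrow> real" where
  "T x b = (if x = 0 \<and> b = 0 then 1
            else if x = 1 \<and> (b = 0 \<or> b = 1) then 1/2
            else if x = 2 \<and> (b = 1 \<or> b = 2) then 1/2 else 0)"

definition S1 :: "nat \<Rightarrow> nat \<Rightarrow> real" where
  "S1 x b = (if x \<in> {0,1,2} \<and> b \<in> {0,1,2} then
     (\<Sum>m\<in>(UNIV::bool set). (\<lambda>x m. if m then (if x = 0 then 1 else 0) else (if x = 0 then 0 else 1)) x m *
        (\<lambda>m b. if m then (if b = 0 then 1 else 0) else (if b = 1 then 1 else 0)) m b) else 0)"

definition S2 :: "nat \<Rightarrow> nat \<Rightarrow> real" where
  "S2 x b = (if x \<in> {0,1,2} \<and> b \<in> {0,1,2} then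
     (\<Sum>m\<in>(UNIV::bool set). (\<lambda>x m. if m then (if x = 2 then 1 else 0) else (if x = 2 then 0 else 1)) x m *
        (\<lambda>m b. if m then (if b = 2 then 1 else 0) else (if b = 0 then 1 else 0)) m b) else 0)"

lemma S1_in: "S1 \<in> one_bit_corr {0,1,2} {0,1,2}"
  unfolding one_bit_corr_def
  apply (rule CollectI)
  apply (rule exI[of _ "\<lambda>x m. if m then (if x = 0 then 1 else 0) else (if x = 0 then 0 else 1)"])
  apply (rule exI[of _ "\<lambda>m b. if m then (if b = 0 then 1 else 0) else (if b = 1 then 1 else 0)"])
  by (auto simp: is_distr_def UNIV_bool S1_def[abs_def])

lemma S2_in: "S2 \<in> one_bit_corr {0,1,2} {0,1,2}"
  unfolding one_bit_corr_def
  apply (rule CollectI)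
  apply (rule exI[of _ "\<lambda>x m. if m then (if x = 2 then 1 else 0) else (if x = 2 then 0 else 1)"])
  apply (rule exI[of _ "\<lambda>m b. if m then (if b = 2 then 1 else 0) else (if b = 0 then 1 else 0)"])
  by (auto simp: is_distr_def UNIV_bool S2_def[abs_def])

lemma T_SR: "T \<in> one_bit_SR_corr {0,1,2} {0,1,2}"
  unfolding one_bit_SR_corr_def
proof (rule CollectI, intro exI conjI)
  let ?Ps = "\<lambda>i::nat. if i = 0 then S1 else S2"
  show "\<forall>i<(2::nat). (\<lambda>_. 1/2::real) i \<ge> 0 \<and> ?Ps i \<in> one_bit_corr {0,1,2} {0,1,2}"
    using S1_in S2_in by auto
  show "(\<Sum>i<(2::nat). (\<lambda>_. 1/2::real) i) = 1" by simp
  show "T = (\<lambda>x b. \<Sum>i<(2::nat). (\<lambda>_. 1/2::real) i * ?Ps i x b)"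
    by (auto simp: fun_eq_iff T_def S1_def S2_def UNIV_bool numeral_2_eq_2 lessThan_Suc)
qed

lemma arith_core:
  fixes a0 a1 a2 p0 p1 p2 q0 q1 q2 :: real
  assumes "0 \<le> a0" "a0 \<le> 1" "0 \<le> a1" "a1 \<le> 1" "0 \<le> a2" "a2 \<le> 1"
    "p0 \<ge> 0" "p1 \<ge> 0" "p2 \<ge> 0" "q0 \<ge> 0" "q1 \<ge> 0" "q2 \<ge> 0"
    "p0 + p1 + p2 = 1" "q0 + q1 + q2 = 1"
    "a0 * p0 + (1 - a0) * q0 = 1"
    "a0 * p1 + (1 - a0) * q1 = 0"
    "a0 * p2 + (1 - a0) * q2 = 0"
    "a1 * p0 + (1 - a1) * q0 = 1/2"
    "a1 * p1 + (1 - a1) * q1 = 1/2"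
    "a1 * p2 + (1 - a1) * q2 = 0"
    "a2 * p0 + (1 - a2) * q0 = 0"
    "a2 * p1 + (1 - a2) * q1 = 1/2"
    "a2 * p2 + (1 - a2) * q2 = 1/2"
  shows False
proof -
  have z: "\<And>a u v::real. 0 \<le> a \<Longrightarrow> a \<le> 1 \<Longrightarrow> u \<ge> 0 \<Longrightarrow> v \<ge> 0 \<Longrightarrow>
      a * u + (1 - a) * v = 0 \<Longrightarrow> a * u = 0 \<and> (1 - a) * v = 0"
    by (smt (verit) mult_nonneg_nonneg)
  have e1: "a0 * p1 = 0" "(1 - a0) * q1 = 0" using z[OF assms(1,2,8,11,16)] by auto
  have e2: "a0 * p2 = 0" "(1 - a0) * q2 = 0" using z[OF assms(1,2,9,12,17)] by auto
  have e3: "a1 * p2 = 0" "(1 - a1) * q2 = 0" using z[OF assms(3,4,9,12,20)] by auto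
  have e4: "a2 * p0 = 0" "(1 - a2) * q0 = 0" using z[OF assms(5,6,7,10,21)] by auto
  consider "a0 = 0" | "a0 = 1" | "a0 \<noteq> 0 \<and> a0 \<noteq> 1" by blast
  then show False
  proof cases
    case 1
    then have "q1 = 0" "q2 = 0" using e1 e2 by auto
    then have "q0 = 1" using assms(14) by auto
    then have "a2 = 1" using e4 by auto
    then have "p0 = 0" using e4 by auto
    have "a1 = 1/2" using assms(18) \<open>p0 = 0\<close> \<open>q0 = 1\<close> by auto
    then have "p2 = 0" using e3 by auto
    then show False using assms(22) \<open>a2 = 1\<close> \<open>p0 = 0\<close> assms(13) by auto
  next
    case 2
    then have "p1 = 0" "p2 = 0" using e1 e2 by auto
    then have "p0 = 1" using assms(13) by auto
    then have "a2 = 0" using e4 by auto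
    then have "q0 = 0" using e4 by auto
    have "a1 = 1/2" using assms(18) \<open>p0 = 1\<close> \<open>q0 = 0\<close> by auto
    then have "q2 = 0" using e3 by auto
    then show False using assms(22) \<open>a2 = 0\<close> \<open>q0 = 0\<close> assms(14) by auto
  next
    case 3
    then have "p1 = 0" "q1 = 0" using e1 by auto
    then show False using assms(22) by auto
  qed
qed

theorem theorem1:
  shows "\<exists>(X :: nat set) (B :: nat set) (\<beta> :: (nat \<Rightarrow> nat \<Rightarrow> real) \<Rightarrow> real).
           finite X \<and> finite B \<and>
           utility \<beta> (one_bit_SR_corr X B) > utility \<beta> (one_bit_corr X B)"
proof (intro exI conjI)
  let ?X = "{0,1,2::nat}"
  let ?b = "\<lambda>P. if P = T then 1 else (0::real)"
  show "finite ?X" by simp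
  show "finite ?X" by simp
  have notin: "T \<notin> one_bit_corr ?X ?X"
  proof
    assume "T \<in> one_bit_corr ?X ?X"
    then obtain E D where dE: "\<forall>x\<in>?X. is_distr (UNIV :: bool set) (E x)"
      and dD: "\<forall>m. is_distr ?X (D m)"
      and eq: "T = (\<lambda>x b. if x \<in> ?X \<and> b \<in> ?X then (\<Sum>m\<in>(UNIV :: bool set). E x m * D m b) else 0)"
      unfolding one_bit_corr_def by blast
    have v: "T x b = E x True * D True b + (1 - E x True) * D False b" if "x \<in> ?X" "b \<in> ?X" for x b
    proof -
      have "E x False = 1 - E x True" using dE that(1) by (auto simp: is_distr_def UNIV_bool)
      then show ?thesis using that by (subst eq) (simp add: UNIV_bool add.commute)
    qed
    have r: "0 \<le> E x True \<and> E x True \<le> 1" if "x \<in> ?X" for x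
      using dE that by (auto simp: is_distr_def UNIV_bool)
    have d: "D m 0 \<ge> 0 \<and> D m 1 \<ge> 0 \<and> D m 2 \<ge> 0 \<and> D m 0 + D m 1 + D m 2 = 1" for m
      using dD[rule_format, of m] by (auto simp: is_distr_def)
    have vv: "\<And>x b. x \<in> ?X \<Longrightarrow> b \<in> ?X \<Longrightarrow> E x True * D True b + (1 - E x True) * D False b = T x b"
      using v by simp
    have r0: "0 \<le> E 0 True" "E 0 True \<le> 1" using r[of 0] by simp_all
    have r1: "0 \<le> E 1 True" "E 1 True \<le> 1" using r[of 1] by simp_all
    have r2: "0 \<le> E 2 True" "E 2 True \<le> 1" using r[of 2] by simp_all
    have dT: "D True 0 \<ge> 0" "D True 1 \<ge> 0" "D True 2 \<ge> 0" "D True 0 + D True 1 + D True 2 = 1"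
      using d[of True] by simp_all
    have dF: "D False 0 \<ge> 0" "D False 1 \<ge> 0" "D False 2 \<ge> 0" "D False 0 + D False 1 + D False 2 = 1"
      using d[of False] by simp_all
    have t00: "T 0 0 = 1" and t01: "T 0 1 = 0" and t02: "T 0 2 = 0"
     and t10: "T 1 0 = 1/2" and t11: "T 1 1 = 1/2" and t12: "T 1 2 = 0"
     and t20: "T 2 0 = 0" and t21: "T 2 1 = 1/2" and t22: "T 2 2 = 1/2"
      by (simp_all add: T_def)
    show False
      using arith_core[OF r0 r1 r2 dT(1-3) dF(1-3) dT(4) dF(4),
        OF vv[of 0 0, unfolded t00] vv[of 0 1, unfolded t01] vv[of 0 2, unfolded t02]
           vv[of 1 0, unfolded t10] vv[of 1 1, unfolded t11] vv[of 1 2, unfolded t12]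
           vv[of 2 0, unfolded t20] vv[of 2 1, unfolded t21] vv[of 2 2, unfolded t22]]
      by simp
  qed
  have "utility ?b (one_bit_corr ?X ?X) \<le> 0"
    unfolding utility_def using notin by (intro SUP_least) auto
  moreover have "utility ?b (one_bit_SR_corr ?X ?X) \<ge> 1"
  proof -
    have "ereal (?b T) \<le> (SUP P\<in>one_bit_SR_corr ?X ?X. ereal (?b P))"
      using T_SR by (rule SUP_upper)
    then show ?thesis unfolding utility_def by (simp add: one_ereal_def)
  qed
  ultimately show "utility ?b (one_bit_SR_corr ?X ?X) > utility ?b (one_bit_corr ?X ?X)"
  proof -
    assume a: "utility ?b (one_bit_corr ?X ?X) \<le> 0" and b: "utility ?b (one_bit_SR_corr ?X ?X) \<ge> 1"
    have "(0::ereal) < 1" by simp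
    with a have "utility ?b (one_bit_corr ?X ?X) < 1" by (rule le_less_trans)
    from this b show ?thesis by (rule less_le_trans)
  qed
qed

end
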